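(* Let $\mathfrak g$ be a finite-dimensional simple Lie algebra over $\mathbb R$ or $\mathbb C$, and let $\mathfrak g=\mathfrak g_{\bar 0}\oplus\mathfrak g_{\bar 1}$ be a nontrivial $\mathbb Z_2$-grading (i.e. $[\mathfrak g_{\bar i},\mathfrak g_{\bar j}]\subseteq\mathfrak g_{\overline{i+j}}$ and $\mathfrak g_{\bar 1}\neq 0$). Then $\mathfrak g_{\bar 1}$ is a maximal Lie triple subsystem of $\mathfrak g$.
   Context: A Lie algebra $\mathfrak g$ is regarded as a Lie triple system with triple product $[x,y,z]:=[[x,y],z]$. A Lie triple subsystem of $\mathfrak g$ is a vector subspace $T$ with $[[T,T],T]\subseteq T$. A maximal Lie triple subsystem is a proper Lie triple subsystem not properly contained in any other proper Lie triple subsystem. *)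

theory Defs
  imports Complex_Main
begin

definition lie_algebra :: "('k::field \<Rightarrow> 'v::ab_group_add \<Rightarrow> 'v) \<Rightarrow> ('v \<Rightarrow> 'v \<Rightarrow> 'v) \<Rightarrow> bool" where
  "lie_algebra s br \<longleftrightarrow> vector_space s
     \<and> (\<forall>x y z. br (x + y) z = br x z + br y z)
     \<and> (\<forall>x y z. br x (y + z) = br x y + br x z)
     \<and> (\<forall>a x y. br (s a x) y = s a (br x y))
     \<and> (\<forall>a x y. br x (s a y) = s a (br x y))
     \<and> (\<forall>x. br x x = 0)
     \<and> (\<forall>x y z. br x (br y z) + br y (br z x) + br z (br x y) = 0)"

definition finite_dim :: "('k::field \<Rightarrow> 'v::ab_group_add \<Rightarrow> 'v) \<Rightarrow> bool" where
  "finite_dim s \<longleftrightarrow> (\<exists>B. finite B \<and> module.span s B = UNIV)"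

definition lie_ideal :: "('k::field \<Rightarrow> 'v::ab_group_add \<Rightarrow> 'v) \<Rightarrow> ('v \<Rightarrow> 'v \<Rightarrow> 'v) \<Rightarrow> 'v set \<Rightarrow> bool" where
  "lie_ideal s br I \<longleftrightarrow> module.subspace s I \<and> (\<forall>x y. y \<in> I \<longrightarrow> br x y \<in> I)"

definition simple_lie_algebra :: "('k::field \<Rightarrow> 'v::ab_group_add \<Rightarrow> 'v) \<Rightarrow> ('v \<Rightarrow> 'v \<Rightarrow> 'v) \<Rightarrow> bool" where
  "simple_lie_algebra s br \<longleftrightarrow> lie_algebra s br \<and> (\<exists>x y. br x y \<noteq> 0)
     \<and> (\<forall>I. lie_ideal s br I \<longrightarrow> I = {0} \<or> I = UNIV)"

definition Z2_grading :: "('k::field \<Rightarrow> 'v::ab_group_add \<Rightarrow> 'v) \<Rightarrow> ('v \<Rightarrow> 'v \<Rightarrow> 'v) \<Rightarrow> 'v set \<Rightarrow> 'v set \<Rightarrow> bool" where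
  "Z2_grading s br g0 g1 \<longleftrightarrow> module.subspace s g0 \<and> module.subspace s g1
     \<and> g0 \<inter> g1 = {0} \<and> (\<forall>v. \<exists>a\<in>g0. \<exists>b\<in>g1. v = a + b)
     \<and> (\<forall>x\<in>g0. \<forall>y\<in>g0. br x y \<in> g0)
     \<and> (\<forall>x\<in>g0. \<forall>y\<in>g1. br x y \<in> g1)
     \<and> (\<forall>x\<in>g1. \<forall>y\<in>g0. br x y \<in> g1)
     \<and> (\<forall>x\<in>g1. \<forall>y\<in>g1. br x y \<in> g0)"

definition lie_triple_subsystem :: "('k::field \<Rightarrow> 'v::ab_group_add \<Rightarrow> 'v) \<Rightarrow> ('v \<Rightarrow> 'v \<Rightarrow> 'v) \<Rightarrow> 'v set \<Rightarrow> bool" where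
  "lie_triple_subsystem s br T \<longleftrightarrow> module.subspace s T
     \<and> (\<forall>x\<in>T. \<forall>y\<in>T. \<forall>z\<in>T. br (br x y) z \<in> T)"

definition maximal_lie_triple_subsystem :: "('k::field \<Rightarrow> 'v::ab_group_add \<Rightarrow> 'v) \<Rightarrow> ('v \<Rightarrow> 'v \<Rightarrow> 'v) \<Rightarrow> 'v set \<Rightarrow> bool" where
  "maximal_lie_triple_subsystem s br T \<longleftrightarrow> lie_triple_subsystem s br T \<and> T \<noteq> UNIV
     \<and> (\<forall>T'. lie_triple_subsystem s br T' \<and> T' \<noteq> UNIV \<and> T \<subseteq> T' \<longrightarrow> T' = T)"

end

theory Submission
  imports Defs
begin

locale glie = module scale
  for scale :: "'k::field \<Rightarrow> 'v::ab_group_add \<Rightarrow> 'v" (infixr \<open>*s\<close> 75) +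
  fixes br :: "'v \<Rightarrow> 'v \<Rightarrow> 'v" and g0 g1 :: "'v set" and x0 y0 :: 'v
  assumes addl: "br (x + y) z = br x z + br y z"
    and addr: "br x (y + z) = br x y + br x z"
    and scl: "br (a *s x) y = a *s (br x y)"
    and scr: "br x (a *s y) = a *s (br x y)"
    and alt: "br x x = 0"
    and jac: "br x (br y z) + br y (br z x) + br z (br x y) = 0"
    and simp_ideal: "\<And>I. lie_ideal scale br I \<Longrightarrow> I = {0} \<or> I = UNIV"
    and nonab: "br x0 y0 \<noteq> 0"
    and s0: "subspace g0" and s1: "subspace g1"
    and int01: "g0 \<inter> g1 = {0}"
    and dec: "\<And>v. \<exists>a\<in>g0. \<exists>b\<in>g1. v = a + b"
    and g00: "x \<in> g0 \<Longrightarrow> y \<in> g0 \<Longrightarrow> br x y \<in> g0"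
    and g01: "x \<in> g0 \<Longrightarrow> y \<in> g1 \<Longrightarrow> br x y \<in> g1"
    and g10: "x \<in> g1 \<Longrightarrow> y \<in> g0 \<Longrightarrow> br x y \<in> g1"
    and g11: "x \<in> g1 \<Longrightarrow> y \<in> g1 \<Longrightarrow> br x y \<in> g0"
    and g1ne: "g1 \<noteq> {0}"
begin

lemma br0l[simp]: "br 0 y = 0"
  using addl[of 0 0 y] by simp
lemma br0r[simp]: "br y 0 = 0"
  using addr[of y 0 0] by simp
lemma brnegl: "br (- x) y = - br x y"
  using addl[of x "-x" y] by (simp add: eq_neg_iff_add_eq_0 add.commute)
lemma brnegr: "br y (- x) = - br y x"
  using addr[of y x "-x"] by (simp add: eq_neg_iff_add_eq_0 add.commute)
lemma anti: "br x y = - br y x"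
  using alt[of "x+y"] addl[of x y "x+y"] addr[of x x y] addr[of y x y] alt[of x] alt[of y]
  by (simp add: eq_neg_iff_add_eq_0)

lemma pre_r: "subspace W \<Longrightarrow> subspace {v. br a v \<in> W}"
  unfolding subspace_def by (auto simp: addr scr)
lemma pre_l: "subspace W \<Longrightarrow> subspace {v. br v a \<in> W}"
  unfolding subspace_def by (auto simp: addl scl)

definition sumset :: "'v set \<Rightarrow> 'v set \<Rightarrow> 'v set" where
  "sumset A B = {a + b | a b. a \<in> A \<and> b \<in> B}"

lemma sumset_sub: "subspace A \<Longrightarrow> subspace B \<Longrightarrow> subspace (sumset A B)"
  unfolding subspace_def sumset_def
proof (intro conjI allI ballI impI)
  assume A: "0 \<in> A \<and> (\<forall>x\<in>A. \<forall>y\<in>A. x + y \<in> A) \<and> (\<forall>c. \<forall>x\<in>A. c *s x \<in> A)"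
    and B: "0 \<in> B \<and> (\<forall>x\<in>B. \<forall>y\<in>B. x + y \<in> B) \<and> (\<forall>c. \<forall>x\<in>B. c *s x \<in> B)"
  show "0 \<in> {a + b |a b. a \<in> A \<and> b \<in> B}" using A B by force
  fix x y assume "x \<in> {a + b |a b. a \<in> A \<and> b \<in> B}" "y \<in> {a + b |a b. a \<in> A \<and> b \<in> B}"
  then obtain a b a' b' where "x = a + b" "y = a' + b'" "a \<in> A" "b \<in> B" "a' \<in> A" "b' \<in> B" by blast
  moreover have "a + b + (a' + b') = (a + a') + (b + b')" by (simp add: algebra_simps)
  ultimately show "x + y \<in> {a + b |a b. a \<in> A \<and> b \<in> B}" using A B by blast
next
  fix c x
  assume A: "0 \<in> A \<and> (\<forall>x\<in>A. \<forall>y\<in>A. x + y \<in> A) \<and> (\<forall>c. \<forall>x\<in>A. c *s x \<in> A)"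
    and B: "0 \<in> B \<and> (\<forall>x\<in>B. \<forall>y\<in>B. x + y \<in> B) \<and> (\<forall>c. \<forall>x\<in>B. c *s x \<in> B)"
    and "x \<in> {a + b |a b. a \<in> A \<and> b \<in> B}"
  then obtain a b where "x = a + b" "a \<in> A" "b \<in> B" by blast
  moreover have "c *s a \<in> A" "c *s b \<in> B" using A B \<open>a \<in> A\<close> \<open>b \<in> B\<close> by auto
  ultimately show "c *s x \<in> {a + b |a b. a \<in> A \<and> b \<in> B}"
    by (auto simp: scale_right_distrib)
qed

lemma ideal_sumset:
  assumes "subspace A" "subspace B"
    and "\<And>x a. a \<in> A \<Longrightarrow> br x a \<in> sumset A B" "\<And>x b. b \<in> B \<Longrightarrow> br x b \<in> sumset A B"
  shows "lie_ideal scale br (sumset A B)"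
proof -
  have ss: "subspace (sumset A B)" using sumset_sub assms by auto
  have "br x y \<in> sumset A B" if y: "y \<in> sumset A B" for x y
  proof -
    obtain a b where "y = a + b" "a \<in> A" "b \<in> B" using y by (auto simp: sumset_def)
    thus ?thesis using assms(3,4) subspace_add[OF ss] by (simp add: addr)
  qed
  thus ?thesis unfolding lie_ideal_def using ss by auto
qed

lemma in_sumset: "a \<in> A \<Longrightarrow> a \<in> sumset A B" if "0 \<in> B"
  using that unfolding sumset_def by force
lemma in_sumset2: "b \<in> B \<Longrightarrow> b \<in> sumset A B" if "0 \<in> A"
  using that unfolding sumset_def by force

definition S1 where "S1 = span {br x y | x y. x \<in> g1 \<and> y \<in> g1}"

lemma S1_g0: "S1 \<subseteq> g0"
  unfolding S1_def
proof (rule span_minimal)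
  show "{br x y |x y. x \<in> g1 \<and> y \<in> g1} \<subseteq> g0" using g11 by auto
qed (rule s0)

lemma g0_S1: "g0 \<subseteq> S1"
proof -
  have sub1: "subspace S1" unfolding S1_def by simp
  have gen: "br x y \<in> S1" if "x \<in> g1" "y \<in> g1" for x y
    unfolding S1_def using that by (auto intro: span_base)
  have stab: "br a v \<in> S1" if a: "a \<in> g0" and v: "v \<in> S1" for a v
  proof -
    have "span {br x y | x y. x \<in> g1 \<and> y \<in> g1} \<subseteq> {v. br a v \<in> S1}"
    proof (rule span_minimal)
      show "subspace {v. br a v \<in> S1}" by (rule pre_r[OF sub1])
      show "{br x y |x y. x \<in> g1 \<and> y \<in> g1} \<subseteq> {v. br a v \<in> S1}"
      proof safe
        fix x y assume xy: "x \<in> g1" "y \<in> g1"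
        have e: "br a (br x y) = - br x (br y a) - br y (br a x)"
          using jac[of a x y] by (simp add: algebra_simps eq_neg_iff_add_eq_0 anti[of y a] brnegr)
        show "br a (br x y) \<in> S1" unfolding e
          by (intro subspace_diff[OF sub1] subspace_neg[OF sub1] gen xy g10 g01 a)
      qed
    qed
    hence "S1 \<subseteq> {v. br a v \<in> S1}" by (simp only: S1_def[symmetric])
    thus ?thesis using v by auto
  qed
  have "lie_ideal scale br (sumset g1 S1)"
  proof (rule ideal_sumset[OF s1 sub1])
    fix x b assume b: "b \<in> g1"
    obtain c d where cd: "c \<in> g0" "d \<in> g1" "x = c + d" using dec by blast
    have "br x b = br d b + br c b" by (simp add: cd addl)
    moreover have "br d b \<in> sumset g1 S1" using gen[OF cd(2) b] in_sumset2 subspace_0[OF s1] by auto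
    moreover have "br c b \<in> sumset g1 S1" using g01[OF cd(1) b] in_sumset subspace_0[OF sub1] by auto
    ultimately show "br x b \<in> sumset g1 S1"
      using subspace_add[OF sumset_sub[OF s1 sub1]] by auto
  next
    fix x b assume b: "b \<in> S1"
    obtain c d where cd: "c \<in> g0" "d \<in> g1" "x = c + d" using dec by blast
    have "br x b = br d b + br c b" by (simp add: cd addl)
    moreover have "br d b \<in> sumset g1 S1" using g10[OF cd(2)] S1_g0 b in_sumset subspace_0[OF sub1] by auto
    moreover have "br c b \<in> sumset g1 S1" using stab[OF cd(1) b] in_sumset2 subspace_0[OF s1] by auto
    ultimately show "br x b \<in> sumset g1 S1"
      using subspace_add[OF sumset_sub[OF s1 sub1]] by auto
  qed
  moreover have "sumset g1 S1 \<noteq> {0}"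
    using g1ne in_sumset subspace_0[OF sub1] subspace_0[OF s1] by blast
  ultimately have U: "sumset g1 S1 = UNIV" using simp_ideal by blast
  show ?thesis
  proof
    fix c assume c: "c \<in> g0"
    have "c \<in> sumset g1 S1" using U by simp
    then obtain u v where uv: "u \<in> g1" "v \<in> S1" "c = u + v" unfolding sumset_def by blast
    have "u = c - v" using uv by simp
    moreover have "c - v \<in> g0" using subspace_diff[OF s0 c, of v] S1_g0 uv(2) by blast
    ultimately have "u \<in> g0" by simp
    hence "u = 0" using uv int01 by auto
    thus "c \<in> S1" using uv by simp
  qed
qed

lemma span_g0:
  assumes "subspace P" "\<And>x y. x \<in> g1 \<Longrightarrow> y \<in> g1 \<Longrightarrow> br x y \<in> P" "c \<in> g0"
  shows "c \<in> P"
proof -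
  have "S1 \<subseteq> P" unfolding S1_def using assms by (intro span_minimal) auto
  thus ?thesis using g0_S1 assms(3) by auto
qed

lemma jac': "br x (br y z) = - br y (br z x) - br z (br x y)"
  using jac[of x y z] by (simp add: algebra_simps eq_neg_iff_add_eq_0)

lemma main: "maximal_lie_triple_subsystem scale br g1"
  unfolding maximal_lie_triple_subsystem_def
proof (intro conjI allI impI)
  show "lie_triple_subsystem scale br g1"
    unfolding lie_triple_subsystem_def using s1 g11 g01 by auto
  show "g1 \<noteq> UNIV"
  proof
    assume "g1 = UNIV"
    hence "g0 = {0}" using int01 by auto
    thus False using nonab g11[of x0 y0] \<open>g1 = UNIV\<close> by auto
  qed
  fix T assume H: "lie_triple_subsystem scale br T \<and> T \<noteq> UNIV \<and> g1 \<subseteq> T"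
  have sT: "subspace T" and lT: "\<And>x y z. x \<in> T \<Longrightarrow> y \<in> T \<Longrightarrow> z \<in> T \<Longrightarrow> br (br x y) z \<in> T"
    and TU: "T \<noteq> UNIV" and gT: "g1 \<subseteq> T"
    using H unfolding lie_triple_subsystem_def by auto
  define A where "A = T \<inter> g0"
  have sA: "subspace A" unfolding A_def by (rule subspace_inter[OF sT s0])
  have F1: "br (br a x) y \<in> A" if a: "a \<in> A" and x: "x \<in> g1" and y: "y \<in> g1" for a x y
  proof -
    have aT: "a \<in> T" and a0: "a \<in> g0" using a unfolding A_def by auto
    have "br (br a x) y \<in> T" by (rule lT[OF aT]) (use x y gT in auto)
    moreover have "br (br a x) y \<in> g0" by (rule g11[OF g01[OF a0 x] y])
    ultimately show ?thesis unfolding A_def by simp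
  qed
  have F2: "br c a \<in> A" if c: "c \<in> g0" and a: "a \<in> A" for c a
  proof -
    have "c \<in> {c. br c a \<in> A}"
    proof (rule span_g0[OF pre_l[OF sA] _ c])
      fix x y
      assume x: "x \<in> g1" and y: "y \<in> g1"
      have aT: "a \<in> T" and a0: "a \<in> g0" using a unfolding A_def by auto
      have "br (br x y) a \<in> T" by (rule lT[OF _ _ aT]) (use x y gT in auto)
      moreover have "br (br x y) a \<in> g0" by (rule g00[OF g11[OF x y] a0])
      ultimately show "br x y \<in> {v. br v a \<in> A}" unfolding A_def by simp
    qed
    thus ?thesis by simp
  qed
  define G where "G = {br a x | a x. a \<in> A \<and> x \<in> g1}"
  define S2 where "S2 = span G"
  have sS2: "subspace S2" unfolding S2_def by simp
  have gen: "br a x \<in> S2" if "a \<in> A" "x \<in> g1" for a x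
    unfolding S2_def G_def using that by (auto intro: span_base)
  have S2g1: "S2 \<subseteq> g1" unfolding S2_def
    by (rule span_minimal[OF _ s1]) (auto simp: G_def A_def intro: g01)
  have stab0: "br c b \<in> S2" if c: "c \<in> g0" and b: "b \<in> S2" for c b
  proof -
    have "span G \<subseteq> {v. br c v \<in> S2}"
    proof (rule span_minimal[OF _ pre_r[OF sS2]])
      show "G \<subseteq> {v. br c v \<in> S2}"
      proof
        fix w assume "w \<in> G"
        then obtain a x where ax: "w = br a x" "a \<in> A" "x \<in> g1" unfolding G_def by blast
        have e: "br c (br a x) = - br a (br x c) - br x (br c a)" by (rule jac')
        have "br x (br c a) = - br (br c a) x" by (rule anti)
        hence "br c (br a x) = - br a (br x c) + br (br c a) x" using e by simp
        moreover have "br a (br x c) \<in> S2" using gen ax g10 c by blast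
        moreover have "br (br c a) x \<in> S2" using gen ax F2 c by blast
        ultimately show "w \<in> {v. br c v \<in> S2}"
          using ax subspace_diff[OF sS2] by auto
      qed
    qed
    thus ?thesis using b unfolding S2_def by auto
  qed
  have stab1: "br d b \<in> A" if d: "d \<in> g1" and b: "b \<in> S2" for d b
  proof -
    have "span G \<subseteq> {v. br d v \<in> A}"
    proof (rule span_minimal[OF _ pre_r[OF sA]])
      show "G \<subseteq> {v. br d v \<in> A}"
      proof
        fix w assume "w \<in> G"
        then obtain a x where ax: "w = br a x" "a \<in> A" "x \<in> g1" unfolding G_def by blast
        have "br d (br a x) = - br (br a x) d" by (rule anti)
        moreover have "br (br a x) d \<in> A" using F1 ax d by blast
        ultimately show "w \<in> {v. br d v \<in> A}" using ax subspace_neg[OF sA] by auto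
      qed
    qed
    thus ?thesis using b unfolding S2_def by auto
  qed
  have ss: "subspace (sumset A S2)" by (rule sumset_sub[OF sA sS2])
  have inA: "a \<in> sumset A S2" if "a \<in> A" for a using in_sumset[OF subspace_0[OF sS2] that] .
  have inS: "b \<in> sumset A S2" if "b \<in> S2" for b using in_sumset2[OF subspace_0[OF sA] that] .
  have "lie_ideal scale br (sumset A S2)"
  proof (rule ideal_sumset[OF sA sS2])
    fix x a assume a: "a \<in> A"
    obtain c d where cd: "c \<in> g0" "d \<in> g1" "x = c + d" using dec by blast
    have "br x a = br c a + - br a d" by (simp add: cd addl anti[of d a])
    moreover have "br c a \<in> sumset A S2" using inA F2 cd a by blast
    moreover have "- br a d \<in> sumset A S2" using inS gen a cd subspace_neg[OF sS2] by blast
    ultimately show "br x a \<in> sumset A S2" using subspace_add[OF ss, of "br c a" "- br a d"] by (simp only:)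
  next
    fix x b assume b: "b \<in> S2"
    obtain c d where cd: "c \<in> g0" "d \<in> g1" "x = c + d" using dec by blast
    have "br x b = br c b + br d b" by (simp add: cd addl)
    moreover have "br c b \<in> sumset A S2" using inS stab0 cd b by blast
    moreover have "br d b \<in> sumset A S2" using inA stab1 cd b by blast
    ultimately show "br x b \<in> sumset A S2" using subspace_add[OF ss] by auto
  qed
  hence "sumset A S2 = {0} \<or> sumset A S2 = UNIV" by (rule simp_ideal)
  moreover have "sumset A S2 \<noteq> UNIV"
  proof
    assume U: "sumset A S2 = UNIV"
    have "g0 \<subseteq> T"
    proof
      fix c assume c: "c \<in> g0"
      have "c \<in> sumset A S2" using U by simp
      then obtain u v where uv: "u \<in> A" "v \<in> S2" "c = u + v" unfolding sumset_def by blast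
      have "v = c - u" using uv by simp
      moreover have "c - u \<in> g0" using subspace_diff[OF s0 c, of u] uv(1) unfolding A_def by blast
      ultimately have "v \<in> g0" by simp
      hence "v = 0" using uv S2g1 int01 by auto
      thus "c \<in> T" using uv unfolding A_def by simp
    qed
    have "T = UNIV"
    proof (rule set_eqI, simp)
      fix v obtain a b where "a \<in> g0" "b \<in> g1" "v = a + b" using dec by blast
      thus "v \<in> T" using subspace_add[OF sT, of a b] \<open>g0 \<subseteq> T\<close> gT by auto
    qed
    thus False using TU by simp
  qed
  ultimately have "sumset A S2 = {0}" by simp
  hence A0: "A \<subseteq> {0}" using inA by blast
  show "T = g1"
  proof
    show "T \<subseteq> g1"
    proof
      fix t assume t: "t \<in> T"
      obtain a b where ab: "a \<in> g0" "b \<in> g1" "t = a + b" using dec by blast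
      have "a = t - b" using ab by simp
      moreover have "t - b \<in> T" using subspace_diff[OF sT t, of b] ab gT by blast
      ultimately have "a \<in> A" using ab unfolding A_def by simp
      hence "a = 0" using A0 by auto
      thus "t \<in> g1" using ab by simp
    qed
  qed (rule gT)
qed

end

lemma general:
  fixes s :: "'k::field \<Rightarrow> 'v::ab_group_add \<Rightarrow> 'v"
  assumes "simple_lie_algebra s br" "Z2_grading s br g0 g1" "g1 \<noteq> {0}"
  shows "maximal_lie_triple_subsystem s br g1"
proof -
  obtain x0 y0 where nz: "br x0 y0 \<noteq> 0" using assms(1) unfolding simple_lie_algebra_def by blast
  interpret glie s br g0 g1 x0 y0
    using assms nz unfolding simple_lie_algebra_def lie_algebra_def Z2_grading_def
      module_iff_vector_space[symmetric]
    by unfold_locales (auto simp: module_def)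
  show ?thesis by (rule main)
qed

theorem mainTheorem4:
  shows "(\<forall>(s :: real \<Rightarrow> 'v::ab_group_add \<Rightarrow> 'v) br g0 g1.
            simple_lie_algebra s br \<and> finite_dim s \<and> Z2_grading s br g0 g1 \<and> g1 \<noteq> {0}
            \<longrightarrow> maximal_lie_triple_subsystem s br g1)
       \<and> (\<forall>(s :: complex \<Rightarrow> 'w::ab_group_add \<Rightarrow> 'w) br g0 g1.
            simple_lie_algebra s br \<and> finite_dim s \<and> Z2_grading s br g0 g1 \<and> g1 \<noteq> {0}
            \<longrightarrow> maximal_lie_triple_subsystem s br g1)"
  by (intro conjI allI impI; rule general; blast)

end
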